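(* In the setting of the context: (i) all diagonal elements of $\mathbf{A}(0)$ and of $\breve{\mathbf{A}}(-1)$ are positive; (ii) for every $k\in\mathbb{Z}_+$, $\sum_{l=k}^\infty\mathbf{A}(l)>\mathbf{O}$ and $\sum_{l=k-1}^\infty\breve{\mathbf{A}}(l)>\mathbf{O}$ (elementwise strictly positive).
   Context: BMAP: $M\in\mathbb{N}$, $\mathbb{M}=\{1,\dots,M\}$; $\mathbf{C}$ an $M\times M$ matrix with negative diagonal and nonnegative off-diagonal entries, $\mathbf{D}(k)$ ($k\in\mathbb{N}$) nonnegative $M\times M$ matrices with $(\mathbf{C}+\sum_k\mathbf{D}(k))\mathbf{e}=\mathbf{0}$ ($\mathbf{e}$ column of ones, $\mathbf{I}$ identity); $\mathbf{D}=\sum_k\mathbf{D}(k)$; the BMAP $\{(N(t),J(t))\}$ on $\mathbb{Z}_+\times\mathbb{M}$, $N(0)=0$: $J$ jumps $i\to j\neq i$ without arrivals at rate $[\mathbf{C}]_{ij}$, and $k$ arrivals with a transition $i\to j$ occur at rate $[\mathbf{D}(k)]_{ij}$. $\mathbf{C}+\mathbf{D}$ is irreducible with stationary vector $\boldsymbol{\pi}$ and $\lambda=\boldsymbol{\pi}\sum_kk\mathbf{D}(k)\mathbf{e}>0$. $H$ is a distribution function on $[0,\infty)$ with mean $h\in(0,\infty)$, $T\sim H$ independent of the BMAP, and $\rho=\lambda h<1$. $[\mathbf{A}(k)]_{ij}=\mathbb{P}(N(T)=k,J(T)=j\mid J(0)=i)$, $k\in\mathbb{Z}_+$. Fix $\mu\in(0,\infty)$,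 let $\theta=\max_{i\in\mathbb{M}}|[\mathbf{C}]_{ii}|$, and define $\breve{\mathbf{A}}(-1)=\frac{\mu}{\mu+\theta}\mathbf{A}(0)$, $\breve{\mathbf{A}}(0)=\frac{\theta}{\mu+\theta}\mathbf{I}+\frac{\mu}{\mu+\theta}\mathbf{A}(1)$, $\breve{\mathbf{A}}(k)=\frac{\mu}{\mu+\theta}\mathbf{A}(k+1)$ for $k\in\mathbb{N}$. *)

theory Defs
  imports "HOL-Analysis.Analysis" "HOL-Probability.Probability"
begin

type_synonym 'm mat = "real^'m^'m"

definition mpow :: "'m::finite mat \<Rightarrow> nat \<Rightarrow> 'm mat" where
  "mpow M n = ((\<lambda>X. X ** M) ^^ n) (mat 1)"

definition mexp :: "'m::finite mat \<Rightarrow> 'm mat" where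
  "mexp M = (\<chi> i j. (\<Sum>n. mpow M n $ i $ j / fact n))"

text \<open>Transition probabilities of the BMAP:
  bmapP C D k t $ i $ j = P(N(t) = k, J(t) = j | J(0) = i).
  Zero arrivals: exp(Ct). k arrivals: decomposition at the epoch s of the last batch
  arrival (of size l, 1 <= l <= k):
  P(k,t) = sum_{l=1..k} int_0^t P(k-l,s) D(l) exp(C(t-s)) ds.\<close>
function bmapP :: "'m::finite mat \<Rightarrow> (nat \<Rightarrow> 'm mat) \<Rightarrow> nat \<Rightarrow> real \<Rightarrow> 'm mat" where
  "bmapP C D k t =
     (if k = 0 then mexp (t *\<^sub>R C)
      else (\<chi> i j. integral {0..t}
              (\<lambda>s. (\<Sum>l\<in>{1..k}. bmapP C D (k - l) s ** D l ** mexp ((t - s) *\<^sub>R C)) $ i $ j)))"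
  by pat_completeness auto
termination
  by (relation "Wellfounded.measure (\<lambda>(C, D, k, t). k)") auto

declare bmapP.simps[simp del]

text \<open>A(k) = P(N(T)=k, J(T)=j | J(0)=i), T ~ H independent (H given as a probability measure).\<close>
definition Amat :: "'m::finite mat \<Rightarrow> (nat \<Rightarrow> 'm mat) \<Rightarrow> real measure \<Rightarrow> nat \<Rightarrow> 'm mat" where
  "Amat C D H k = (\<chi> i j. (\<integral>t. bmapP C D k t $ i $ j \<partial>H))"

definition theta :: "'m::finite mat \<Rightarrow> real" where
  "theta C = Max {\<bar>C $ i $ i\<bar> | i. True}"

definition Abreve :: "'m::finite mat \<Rightarrow> (nat \<Rightarrow> 'm mat) \<Rightarrow> real measure \<Rightarrow> real \<Rightarrow> int \<Rightarrow> 'm mat" where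
  "Abreve C D H \<mu> k =
     (if k = -1 then (\<mu> / (\<mu> + theta C)) *\<^sub>R Amat C D H 0
      else if k = 0 then (theta C / (\<mu> + theta C)) *\<^sub>R mat 1 + (\<mu> / (\<mu> + theta C)) *\<^sub>R Amat C D H 1
      else if k > 0 then (\<mu> / (\<mu> + theta C)) *\<^sub>R Amat C D H (nat k + 1)
      else 0)"

definition Dtot :: "(nat \<Rightarrow> 'm::finite mat) \<Rightarrow> 'm mat" where
  "Dtot D = (\<chi> i j. (\<Sum>k. D (Suc k) $ i $ j))"

definition gen_irreducible :: "'m::finite mat \<Rightarrow> bool" where
  "gen_irreducible Q \<longleftrightarrow> (\<forall>i j. (i, j) \<in> {(a, b). a \<noteq> b \<and> Q $ a $ b > 0}\<^sup>*)"

definition stationary :: "'m::finite mat \<Rightarrow> real^'m \<Rightarrow> bool" where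
  "stationary Q p \<longleftrightarrow> p v* Q = 0 \<and> (\<Sum>i\<in>UNIV. p $ i) = 1 \<and> (\<forall>i. p $ i \<ge> 0)"

definition arrival_rate :: "(nat \<Rightarrow> 'm::finite mat) \<Rightarrow> real^'m \<Rightarrow> real" where
  "arrival_rate D p = (\<Sum>i\<in>UNIV. p $ i * (\<Sum>k. real (Suc k) * (\<Sum>j\<in>UNIV. D (Suc k) $ i $ j)))"

end

theory Submission imports Defs begin


lemma mpow_0[simp]: "mpow M 0 = mat 1" by (simp add: mpow_def)
lemma mpow_Suc: "mpow M (Suc n) = mpow M n ** M" by (simp add: mpow_def)

lemma mpow_add: "mpow M (m + n) = mpow M m ** mpow M n"
  by (induction n) (simp_all add: mpow_Suc matrix_mul_assoc)

lemma mpow_comm: "mpow M n ** M = M ** mpow M n"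
proof (induction n)
  case (Suc n)
  then show ?case by (metis mpow_Suc matrix_mul_assoc)
qed simp

lemma mmult_entry: "(A ** B) $ i $ j = (\<Sum>k\<in>UNIV. A $ i $ k * B $ k $ j)"
  by (simp add: matrix_matrix_mult_def)

lemma mpow_scale: "mpow (c *\<^sub>R M) n = (c ^ n) *\<^sub>R mpow M n"
proof (induction n)
  case (Suc n)
  show ?case
    by (simp add: mpow_Suc Suc vec_eq_iff mmult_entry sum_distrib_left algebra_simps)
qed simp

lemma mat1_entry: "mat 1 $ i $ j = (if i = j then 1 else 0)"
  by (simp add: mat_def)



lemma matrix_add_rdistrib: "((A::'m::finite mat) + B) ** C = A ** C + B ** C"
  by (simp add: vec_eq_iff mmult_entry sum.distrib distrib_right)

lemma sum_mmult_right: "(sum f S) ** (Y::'m::finite mat) = sum (\<lambda>k. f k ** Y) S"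
  by (induction S rule: infinite_finite_induct) (simp_all add: vec_eq_iff mmult_entry sum.distrib distrib_right)

lemma sum_mmult_left: "(Y::'m::finite mat) ** (sum f S) = sum (\<lambda>k. Y ** f k) S"
  by (induction S rule: infinite_finite_induct) (simp_all add: matrix_add_ldistrib)

lemma mpow_comm_gen:
  assumes "A ** B = (B::'m::finite mat) ** A"
  shows "mpow B n ** A = A ** mpow B n"
proof (induction n)
  case (Suc n)
  have "mpow B (Suc n) ** A = mpow B n ** (B ** A)" by (simp add: mpow_Suc matrix_mul_assoc)
  also have "\<dots> = (mpow B n ** A) ** B" using assms by (simp add: matrix_mul_assoc[symmetric])
  also have "\<dots> = A ** mpow B (Suc n)" using Suc by (simp add: mpow_Suc matrix_mul_assoc)
  finally show ?case .
qed simp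

lemma mpow_binomial:
  assumes AB: "A ** B = (B::'m::finite mat) ** A"
  shows "mpow (A + B) n = (\<Sum>k\<le>n. real (n choose k) *\<^sub>R (mpow A k ** mpow B (n - k)))"
proof (induction n)
  case 0 then show ?case by simp
next
  case (Suc n)
  have cA: "\<And>k m. mpow A k ** mpow B m ** A = mpow A (Suc k) ** mpow B m"
    by (metis mpow_comm_gen[OF AB] matrix_mul_assoc mpow_Suc)
  have cB: "\<And>k m. mpow A k ** mpow B m ** B = mpow A k ** mpow B (Suc m)"
    by (metis matrix_mul_assoc mpow_Suc)
  have "mpow (A + B) (Suc n) = (\<Sum>k\<le>n. real (n choose k) *\<^sub>R (mpow A k ** mpow B (n - k))) ** (A + B)"
    by (simp add: mpow_Suc Suc)
  also have "\<dots> = (\<Sum>k\<le>n. real (n choose k) *\<^sub>R (mpow A (Suc k) ** mpow B (n - k)))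
      + (\<Sum>k\<le>n. real (n choose k) *\<^sub>R (mpow A k ** mpow B (Suc n - k)))"
    by (simp add: matrix_add_ldistrib sum_mmult_right sum.distrib scalar_matrix_assoc[symmetric] cA cB Suc_diff_le)
  also have "(\<Sum>k\<le>n. real (n choose k) *\<^sub>R (mpow A k ** mpow B (Suc n - k)))
      = (\<Sum>k\<le>Suc n. real (n choose k) *\<^sub>R (mpow A k ** mpow B (Suc n - k)))"
    by simp
  also have "\<dots> = mpow B (Suc n) + (\<Sum>k\<le>n. real (n choose Suc k) *\<^sub>R (mpow A (Suc k) ** mpow B (n - k)))"
    by (subst sum.atMost_Suc_shift) simp
  finally have "mpow (A + B) (Suc n) = mpow B (Suc n) +
      (\<Sum>k\<le>n. real (n choose k) *\<^sub>R (mpow A (Suc k) ** mpow B (n - k)) +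
                real (n choose Suc k) *\<^sub>R (mpow A (Suc k) ** mpow B (n - k)))"
    by (simp add: sum.distrib algebra_simps)
  also have "\<dots> = (\<Sum>k\<le>Suc n. real (Suc n choose k) *\<^sub>R (mpow A k ** mpow B (Suc n - k)))"
    by (subst sum.atMost_Suc_shift) (simp add: scaleR_add_left)
  finally show ?case .
qed

definition mcoef :: "'m::finite mat \<Rightarrow> 'm \<Rightarrow> 'm \<Rightarrow> nat \<Rightarrow> real" where
  "mcoef M i j n = mpow M n $ i $ j / fact n"

definition mK :: "'m::finite mat \<Rightarrow> real" where
  "mK M = (\<Sum>a\<in>UNIV. \<Sum>b\<in>UNIV. \<bar>M $ a $ b\<bar>)"

lemma mK_nonneg: "mK M \<ge> 0"
  unfolding mK_def by (intro sum_nonneg) auto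

lemma mpow_bound: "\<bar>mpow M n $ i $ j\<bar> \<le> mK M ^ n"
proof (induction n arbitrary: j)
  case 0 then show ?case by (simp add: mat1_entry)
next
  case (Suc n)
  have col: "(\<Sum>k\<in>UNIV. \<bar>M $ k $ j\<bar>) \<le> mK M"
    unfolding mK_def by (intro sum_mono member_le_sum) auto
  have "\<bar>mpow M (Suc n) $ i $ j\<bar> \<le> (\<Sum>k\<in>UNIV. \<bar>mpow M n $ i $ k\<bar> * \<bar>M $ k $ j\<bar>)"
    unfolding mpow_Suc mmult_entry by (rule order_trans[OF sum_abs]) (simp add: abs_mult)
  also have "\<dots> \<le> (\<Sum>k\<in>UNIV. mK M ^ n * \<bar>M $ k $ j\<bar>)"
    by (intro sum_mono mult_right_mono Suc) auto
  also have "\<dots> = mK M ^ n * (\<Sum>k\<in>UNIV. \<bar>M $ k $ j\<bar>)" by (simp add: sum_distrib_left)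
  also have "\<dots> \<le> mK M ^ n * mK M"
    by (intro mult_left_mono col) (simp add: mK_nonneg)
  finally show ?case by (simp add: mult.commute)
qed

lemma mcoef_abs_summable: "summable (\<lambda>n. norm (mcoef M i j n * x ^ n))"
proof -
  have b: "norm (norm (mcoef M i j n * x ^ n)) \<le> inverse (fact n) * (mK M * \<bar>x\<bar>) ^ n" for n
  proof -
    have "norm (norm (mcoef M i j n * x ^ n)) = \<bar>mpow M n $ i $ j\<bar> * \<bar>x\<bar> ^ n / fact n"
      by (simp add: mcoef_def abs_mult power_abs)
    also have "\<dots> \<le> mK M ^ n * \<bar>x\<bar> ^ n / fact n"
      by (intro divide_right_mono mult_right_mono mpow_bound) auto
    finally show ?thesis
      by (simp add: power_mult_distrib field_simps)
  qed
  show ?thesis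
    by (rule summable_comparison_test'[OF summable_exp b])
qed

lemma mcoef_summable: "summable (\<lambda>n. mcoef M i j n * x ^ n)"
  by (rule summable_norm_cancel[OF mcoef_abs_summable])

lemma mexp_entry: "mexp (x *\<^sub>R M) $ i $ j = (\<Sum>n. mcoef M i j n * x ^ n)"
proof -
  have "(\<lambda>n. mpow (x *\<^sub>R M) n $ i $ j / fact n) = (\<lambda>n. mcoef M i j n * x ^ n)"
    by (rule ext) (simp add: mpow_scale mcoef_def)
  then show ?thesis by (simp add: mexp_def)
qed

lemma mexp_entry1: "mexp M $ i $ j = (\<Sum>n. mcoef M i j n)"
  using mexp_entry[of 1 M i j] by (simp only: power_one mult_1_right scaleR_one)

lemma mcoef_summable1: "summable (\<lambda>n. norm (mcoef M i j n))"
  using mcoef_abs_summable[of M i j 1] by (simp only: power_one mult_1_right)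

lemma mexp_add:
  assumes AB: "A ** B = (B::'m::finite mat) ** A"
  shows "mexp (A + B) = mexp A ** mexp B"
proof -
  have "mexp (A + B) $ i $ j = (mexp A ** mexp B) $ i $ j" for i j
  proof -
    have trm: "mcoef (A + B) i j n = (\<Sum>m\<in>UNIV. \<Sum>k\<le>n. mcoef A i m k * mcoef B m j (n - k))" for n
    proof -
      have "mcoef (A + B) i j n = (\<Sum>k\<le>n. real (n choose k) * (mpow A k ** mpow B (n - k)) $ i $ j) / fact n"
        by (simp add: mcoef_def mpow_binomial[OF AB] sum_component)
      also have "\<dots> = (\<Sum>k\<le>n. (mpow A k ** mpow B (n - k)) $ i $ j / (fact k * fact (n - k)))"
        unfolding sum_divide_distrib
        by (intro sum.cong refl) (simp add: binomial_fact field_simps)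
      also have "\<dots> = (\<Sum>k\<le>n. \<Sum>m\<in>UNIV. mcoef A i m k * mcoef B m j (n - k))"
        by (simp add: mmult_entry mcoef_def sum_divide_distrib)
      finally show ?thesis by (simp add: sum.swap[of _ "{..n}"])
    qed
    have "mexp (A + B) $ i $ j = (\<Sum>n. \<Sum>m\<in>UNIV. \<Sum>k\<le>n. mcoef A i m k * mcoef B m j (n - k))"
      by (simp add: mexp_entry1 trm)
    also have "\<dots> = (\<Sum>m\<in>UNIV. \<Sum>n. \<Sum>k\<le>n. mcoef A i m k * mcoef B m j (n - k))"
      by (rule suminf_sum) (intro summable_Cauchy_product mcoef_summable1)
    also have "\<dots> = (\<Sum>m\<in>UNIV. (\<Sum>n. mcoef A i m n) * (\<Sum>n. mcoef B m j n))"
      by (intro sum.cong refl Cauchy_product[symmetric] mcoef_summable1)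
    also have "\<dots> = (mexp A ** mexp B) $ i $ j" by (simp add: mmult_entry mexp_entry1)
    finally show ?thesis .
  qed
  then show ?thesis by (simp add: vec_eq_iff)
qed

lemma mpow_zero: "mpow (0::'m::finite mat) n = (if n = 0 then mat 1 else 0)"
  by (cases n) (simp_all add: mpow_Suc)

lemma mexp_zero: "mexp (0::'m::finite mat) = mat 1"
proof -
  have "mexp (0::'m mat) $ i $ j = mat 1 $ i $ j" for i j
  proof -
    have "(\<lambda>n. mpow (0::'m mat) n $ i $ j / fact n) = (\<lambda>n. if n = 0 then mat 1 $ i $ j else 0)"
      by (auto simp: mpow_zero)
    then show ?thesis by (simp add: mexp_def sums_unique[OF sums_single, symmetric])
  qed
  then show ?thesis by (simp add: vec_eq_iff)
qed

lemma mpow_diag: "mpow (c *\<^sub>R mat 1 :: 'm::finite mat) n = (c ^ n) *\<^sub>R mat 1"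
  by (induction n) (simp_all add: mpow_Suc matrix_scalar_ac scalar_matrix_assoc[symmetric])


lemma mexp_group: "mexp (s *\<^sub>R M) ** mexp (u *\<^sub>R M) = mexp ((s + u) *\<^sub>R (M::'m::finite mat))"
proof -
  have "(s *\<^sub>R M) ** (u *\<^sub>R M) = (u *\<^sub>R M) ** (s *\<^sub>R M)"
    by (simp add: matrix_scalar_ac scalar_matrix_assoc[symmetric])
  from mexp_add[OF this] show ?thesis by (simp add: scaleR_add_left)
qed

lemma mexp_at0: "mexp (0 *\<^sub>R (M::'m::finite mat)) = mat 1"
  by (simp add: mexp_zero)

lemma mexp_deriv:
  "((\<lambda>t. mexp (t *\<^sub>R M) $ i $ j) has_real_derivative (mexp (t *\<^sub>R M) ** M) $ i $ j) (at t)"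
proof -
  have d: "((\<lambda>t. \<Sum>n. mcoef M i j n * t ^ n) has_real_derivative (\<Sum>n. diffs (mcoef M i j) n * t ^ n)) (at t)"
    by (rule termdiffs_strong_converges_everywhere) (rule mcoef_summable)
  have "(\<Sum>n. diffs (mcoef M i j) n * t ^ n) = (\<Sum>n. \<Sum>m\<in>UNIV. mcoef M i m n * t ^ n * M $ m $ j)"
  proof (rule suminf_cong)
    fix n
    have "diffs (mcoef M i j) n * t ^ n = t ^ n * mpow M (Suc n) $ i $ j / fact n"
      by (simp add: diffs_def mcoef_def fact_Suc del: of_nat_Suc)
    also have "\<dots> = (\<Sum>m\<in>UNIV. mcoef M i m n * t ^ n * M $ m $ j)"
      by (simp add: mpow_Suc mmult_entry mcoef_def sum_distrib_left sum_divide_distrib field_simps)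
    finally show "diffs (mcoef M i j) n * t ^ n = (\<Sum>m\<in>UNIV. mcoef M i m n * t ^ n * M $ m $ j)" .
  qed
  also have "\<dots> = (\<Sum>m\<in>UNIV. \<Sum>n. mcoef M i m n * t ^ n * M $ m $ j)"
    by (rule suminf_sum) (intro summable_mult2 mcoef_summable)
  also have "\<dots> = (\<Sum>m\<in>UNIV. (\<Sum>n. mcoef M i m n * t ^ n) * M $ m $ j)"
    by (intro sum.cong refl suminf_mult2[symmetric] mcoef_summable)
  also have "\<dots> = (mexp (t *\<^sub>R M) ** M) $ i $ j"
    by (simp add: mmult_entry mexp_entry)
  finally show ?thesis using d by (simp add: mexp_entry)
qed

lemma mexp_cont: "continuous_on A (\<lambda>t. mexp (t *\<^sub>R M) $ i $ j)"
  by (intro continuous_at_imp_continuous_on ballI DERIV_isCont[OF mexp_deriv])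

lemma mpow_one: "mpow (mat 1 :: 'm::finite mat) n = mat 1"
  by (induction n) (simp_all add: mpow_Suc)

lemma mexp_diag: "mexp (c *\<^sub>R (mat 1 :: 'm::finite mat)) = exp c *\<^sub>R mat 1"
proof -
  have "mexp (c *\<^sub>R (mat 1 :: 'm mat)) $ i $ j = (exp c *\<^sub>R (mat 1 :: 'm mat)) $ i $ j" for i j
  proof (cases "i = j")
    case True
    have "(\<lambda>n. mcoef (mat 1 :: 'm mat) i j n * c ^ n) = (\<lambda>n. c ^ n /\<^sub>R fact n)"
      using True by (simp add: mcoef_def mpow_one mat1_entry field_simps)
    moreover have "(\<Sum>n. c ^ n /\<^sub>R fact n) = exp c"
      using sums_unique[OF exp_converges[of c]] by simp
    ultimately show ?thesis using True
      by (simp add: mexp_entry mat1_entry)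
  next
    case False
    then show ?thesis by (simp add: mexp_entry mcoef_def mpow_one mat1_entry)
  qed
  then show ?thesis by (simp add: vec_eq_iff)
qed

lemma mmult_sid_r: "X ** (a *\<^sub>R mat 1) = a *\<^sub>R (X::'m::finite mat)"
  by (metis matrix_mul_rid matrix_scalar_ac)

lemma mmult_sid_l: "(a *\<^sub>R mat 1) ** X = a *\<^sub>R (X::'m::finite mat)"
  by (metis matrix_mul_lid scalar_matrix_assoc)

lemma mexp_shift:
  "mexp (t *\<^sub>R M) = exp (- c * t) *\<^sub>R mexp (t *\<^sub>R (M + c *\<^sub>R mat 1))"
proof -
  have eq: "t *\<^sub>R M = t *\<^sub>R (M + c *\<^sub>R mat 1) + (- c * t) *\<^sub>R mat 1"
    by (simp add: algebra_simps)
  have comm: "(t *\<^sub>R (M + c *\<^sub>R mat 1)) ** ((- c * t) *\<^sub>R mat 1) = ((- c * t) *\<^sub>R mat 1) ** (t *\<^sub>R (M + c *\<^sub>R (mat 1::'a::finite mat)))"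
    by (simp only: mmult_sid_r mmult_sid_l)
  show ?thesis
    unfolding eq mexp_add[OF comm] mexp_diag
    by (simp only: mmult_sid_r)
qed

lemma sum_ge_term:
  fixes f :: "'a \<Rightarrow> real"
  assumes "finite S" "a \<in> S" "\<And>x. x \<in> S \<Longrightarrow> f x \<ge> 0"
  shows "f a \<le> sum f S"
  by (rule member_le_sum) (use assms in auto)

lemma suminf_ge_term:
  fixes f :: "nat \<Rightarrow> real"
  assumes "summable f" "\<And>n. f n \<ge> 0"
  shows "f n \<le> suminf f"
  using sum_le_suminf[OF assms(1), of "{n}"] assms(2) by simp


lemma mmult_nonneg:
  assumes "\<And>a b. A $ a $ b \<ge> 0" "\<And>a b. B $ a $ b \<ge> (0::real)"
  shows "(A ** B) $ i $ j \<ge> 0"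
  unfolding mmult_entry by (intro sum_nonneg mult_nonneg_nonneg assms)

lemma mpow_nonneg:
  assumes "\<And>a b. M $ a $ b \<ge> 0"
  shows "mpow M n $ i $ j \<ge> 0"
proof (induction n arbitrary: i j)
  case 0 then show ?case by (simp add: mat1_entry)
next
  case (Suc n) then show ?case unfolding mpow_Suc by (intro mmult_nonneg assms)
qed

lemma mexp_nonneg_gen:
  assumes "\<And>a b. M $ a $ b \<ge> 0" "t \<ge> 0"
  shows "mexp (t *\<^sub>R M) $ i $ j \<ge> 0"
  unfolding mexp_entry
  by (intro suminf_nonneg mcoef_summable mult_nonneg_nonneg) (simp_all add: mcoef_def mpow_nonneg assms)

lemma mexp_term_le:
  assumes "\<And>a b. M $ a $ b \<ge> 0" "t \<ge> 0"
  shows "mcoef M i j n * t ^ n \<le> mexp (t *\<^sub>R M) $ i $ j"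
  unfolding mexp_entry
  by (intro suminf_ge_term mcoef_summable mult_nonneg_nonneg) (simp_all add: mcoef_def mpow_nonneg assms)

locale bmapL =
  fixes C :: "'m::finite mat" and D :: "nat \<Rightarrow> 'm mat"
  assumes C_diag: "\<And>i. C $ i $ i < 0"
    and C_off: "\<And>i j. i \<noteq> j \<Longrightarrow> C $ i $ j \<ge> 0"
    and D_nonneg: "\<And>k i j. k \<ge> 1 \<Longrightarrow> D k $ i $ j \<ge> 0"
    and rows: "\<And>i. (\<lambda>k. \<Sum>j\<in>UNIV. D (Suc k) $ i $ j) sums (- (\<Sum>j\<in>UNIV. C $ i $ j))"
begin

definition E :: "real \<Rightarrow> 'm mat" where "E t = mexp (t *\<^sub>R C)"
definition Q :: "'m mat" where "Q = C + theta C *\<^sub>R mat 1"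
definition RC :: "('m \<times> 'm) set" where "RC = {(a, b). a \<noteq> b \<and> C $ a $ b > 0}"

lemma theta_ge: "\<bar>C $ i $ i\<bar> \<le> theta C"
proof -
  have "{\<bar>C $ i $ i\<bar> | i. True} = range (\<lambda>i. \<bar>C $ i $ i\<bar>)" by auto
  then show ?thesis unfolding theta_def by simp
qed

lemma theta_pos: "theta C > 0"
  using theta_ge[of undefined] C_diag[of undefined] by linarith

lemma Q_nonneg: "Q $ a $ b \<ge> 0"
proof (cases "a = b")
  case True then show ?thesis using theta_ge[of a] by (simp add: Q_def mat1_entry)
next
  case False then show ?thesis using C_off[of a b] by (simp add: Q_def mat1_entry)
qed

lemma E_shift: "E t $ i $ j = exp (- theta C * t) * mexp (t *\<^sub>R Q) $ i $ j"
  unfolding E_def Q_def by (subst mexp_shift[of t C "theta C"]) simp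

lemma E_nonneg: "t \<ge> 0 \<Longrightarrow> E t $ i $ j \<ge> 0"
  unfolding E_shift by (intro mult_nonneg_nonneg mexp_nonneg_gen Q_nonneg) auto

lemma E_diag_pos: "t \<ge> 0 \<Longrightarrow> E t $ i $ i > 0"
proof -
  assume t: "t \<ge> 0"
  have "mcoef Q i i 0 * t ^ 0 \<le> mexp (t *\<^sub>R Q) $ i $ i"
    by (rule mexp_term_le[OF Q_nonneg t])
  then have "mexp (t *\<^sub>R Q) $ i $ i \<ge> 1" by (simp add: mcoef_def mat1_entry)
  then show ?thesis unfolding E_shift by (intro mult_pos_pos) auto
qed

lemma RC_pow: "(i, j) \<in> RC\<^sup>* \<Longrightarrow> \<exists>n. mpow Q n $ i $ j > 0"
proof (induction rule: rtrancl_induct)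
  case base then show ?case by (intro exI[of _ 0]) (simp add: mat1_entry)
next
  case (step a b)
  then obtain n where n: "mpow Q n $ i $ a > 0" by blast
  have ab: "Q $ a $ b > 0" using step(2) by (simp add: RC_def Q_def mat1_entry)
  have "mpow Q n $ i $ a * Q $ a $ b \<le> (\<Sum>k\<in>UNIV. mpow Q n $ i $ k * Q $ k $ b)"
    by (rule sum_ge_term) (auto intro: mult_nonneg_nonneg mpow_nonneg Q_nonneg)
  then have "mpow Q (Suc n) $ i $ b > 0"
    using mult_pos_pos[OF n ab] by (simp add: mpow_Suc mmult_entry)
  then show ?case by blast
qed

lemma E_reach_pos:
  assumes "(i, j) \<in> RC\<^sup>*" "t > 0"
  shows "E t $ i $ j > 0"
proof -
  obtain n where n: "mpow Q n $ i $ j > 0" using RC_pow[OF assms(1)] by blast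
  have "mcoef Q i j n * t ^ n \<le> mexp (t *\<^sub>R Q) $ i $ j"
    by (rule mexp_term_le[OF Q_nonneg]) (use assms in simp)
  moreover have "mcoef Q i j n * t ^ n > 0" using n assms(2) by (simp add: mcoef_def)
  ultimately show ?thesis unfolding E_shift by (intro mult_pos_pos) auto
qed

lemma E_0: "E 0 = mat 1" unfolding E_def by (simp add: mexp_zero)

lemma E_group: "E s ** E u = E (s + u)" unfolding E_def by (rule mexp_group)

lemma E_deriv: "((\<lambda>t. E t $ i $ j) has_real_derivative (E t ** C) $ i $ j) (at t)"
  unfolding E_def by (rule mexp_deriv)

lemma E_cont: "continuous_on A (\<lambda>t. E t $ i $ j)"
  unfolding E_def by (rule mexp_cont)

end


lemma tri_reindex_le:
  fixes f :: "nat \<Rightarrow> nat \<Rightarrow> real"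
  assumes nn: "\<And>m l. l \<ge> 1 \<Longrightarrow> f m l \<ge> 0"
  shows "(\<Sum>k\<le>n. \<Sum>l\<in>{1..k}. f (k - l) l) \<le> (\<Sum>m\<le>n. \<Sum>l\<in>{1..n}. f m l)"
proof -
  have "(\<Sum>k\<le>n. \<Sum>l\<in>{1..k}. f (k - l) l) = (\<Sum>x\<in>(SIGMA k:{..n}. {1..k}). f (fst x - snd x) (snd x))"
    by (subst sum.Sigma) (auto simp: split_def)
  also have "\<dots> \<le> (\<Sum>y\<in>{..n} \<times> {1..n}. f (fst y) (snd y))"
  proof (rule sum_le_included[where i="\<lambda>y. (fst y + snd y, snd y)"])
    show "\<forall>x\<in>(SIGMA k:{..n}. {1..k}). \<exists>y\<in>{..n} \<times> {1..n}. (fst y + snd y, snd y) = x \<and>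
          f (fst x - snd x) (snd x) \<le> f (fst y) (snd y)"
    proof
      fix x assume x: "x \<in> (SIGMA k:{..n}. {1..k})"
      then show "\<exists>y\<in>{..n} \<times> {1..n}. (fst y + snd y, snd y) = x \<and>
          f (fst x - snd x) (snd x) \<le> f (fst y) (snd y)"
        by (intro bexI[of _ "(fst x - snd x, snd x)"]) auto
    qed
  qed (auto simp: nn)
  also have "\<dots> = (\<Sum>m\<le>n. \<Sum>l\<in>{1..n}. f m l)"
    by (subst sum.cartesian_product) (simp add: split_def)
  finally show ?thesis .
qed

context bmapL begin

definition G :: "nat \<Rightarrow> real \<Rightarrow> 'm mat" where
  "G k s = (\<Sum>l\<in>{1..k}. bmapP C D (k - l) s ** D l)"

definition mc0 :: "(real \<Rightarrow> 'm mat) \<Rightarrow> bool" where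
  "mc0 F \<longleftrightarrow> (\<forall>i j. continuous_on {0..} (\<lambda>t. F t $ i $ j))"

lemma P0: "bmapP C D 0 t = E t"
  by (subst bmapP.simps) (simp add: E_def)

lemma Pk: "k > 0 \<Longrightarrow> bmapP C D k t $ i $ j = integral {0..t} (\<lambda>s. (G k s ** E (t - s)) $ i $ j)"
  by (subst bmapP.simps) (simp add: G_def E_def sum_mmult_right)

lemma mc0_mult: "mc0 A \<Longrightarrow> mc0 B \<Longrightarrow> mc0 (\<lambda>t. A t ** B t)"
  unfolding mc0_def mmult_entry by (intro allI continuous_on_sum continuous_on_mult) auto

lemma mc0_sum: "(\<And>l. l \<in> S \<Longrightarrow> mc0 (F l)) \<Longrightarrow> mc0 (\<lambda>t. \<Sum>l\<in>S. F l t)"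
  unfolding mc0_def by (simp add: sum_component) (intro allI continuous_on_sum; auto)

lemma mc0_const: "mc0 (\<lambda>t. M)"
  unfolding mc0_def by simp

lemma E_cont_comp: "continuous_on A f \<Longrightarrow> continuous_on A (\<lambda>s. E (f s) $ i $ j)"
  using continuous_on_compose2[OF E_cont[of UNIV i j]] by auto

lemma mc0_Eneg: "mc0 (\<lambda>s. E (- s))"
  unfolding mc0_def by (intro allI E_cont_comp continuous_intros)

lemma mc0_Eshift: "mc0 (\<lambda>s. E (t - s))"
  unfolding mc0_def by (intro allI E_cont_comp continuous_intros)

lemma integral_deriv0:
  assumes "continuous_on {0..} h" "t \<ge> 0"
  shows "((\<lambda>x. integral {0..x} h) has_real_derivative h t) (at t within {0..})"
proof -
  have "((\<lambda>x. integral {0..x} h) has_real_derivative h t) (at t within {0..t+1})"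
    by (rule integral_has_real_derivative) (use assms in \<open>auto intro: continuous_on_subset\<close>)
  moreover have "at t within {0..t+1} = at t within {0::real..}"
    by (rule at_within_nhd[where S="{t - 1 <..< t + 1}"]) auto
  ultimately show ?thesis by simp
qed

lemma P_repr:
  assumes k: "k > 0" and Gc: "mc0 (G k)"
  shows "bmapP C D k t $ i $ j = (\<Sum>m\<in>UNIV. E t $ m $ j * integral {0..t} (\<lambda>s. (G k s ** E (-s)) $ i $ m))"
proof (cases "t \<ge> 0")
  case False then show ?thesis using k by (simp add: Pk)
next
  case True
  have eq: "(G k s ** E (t - s)) $ i $ j = (\<Sum>m\<in>UNIV. (G k s ** E (-s)) $ i $ m * E t $ m $ j)" for s
  proof -
    have "E (-s) ** E t = E (t - s)" using E_group[of "-s" t] by simp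
    then have "G k s ** E (t - s) = (G k s ** E (-s)) ** E t" by (simp add: matrix_mul_assoc[symmetric])
    then show ?thesis by (simp only: mmult_entry)
  qed
  have int: "(\<lambda>s. (G k s ** E (-s)) $ i $ m) integrable_on {0..t}" for m
    by (rule integrable_continuous_interval, rule continuous_on_subset[OF mc0_mult[OF Gc mc0_Eneg, unfolded mc0_def, rule_format]]) auto
  have "bmapP C D k t $ i $ j = integral {0..t} (\<lambda>s. \<Sum>m\<in>UNIV. (G k s ** E (-s)) $ i $ m * E t $ m $ j)"
    using k by (simp add: Pk eq)
  also have "\<dots> = (\<Sum>m\<in>UNIV. integral {0..t} (\<lambda>s. (G k s ** E (-s)) $ i $ m * E t $ m $ j))"
    by (rule Henstock_Kurzweil_Integration.integral_sum) (auto intro: integrable_on_mult_left int)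
  also have "\<dots> = (\<Sum>m\<in>UNIV. E t $ m $ j * integral {0..t} (\<lambda>s. (G k s ** E (-s)) $ i $ m))"
    by (simp add: Henstock_Kurzweil_Integration.integral_mult_left mult.commute)
  finally show ?thesis .
qed

lemma DP_all:
  "\<forall>t\<ge>0. \<forall>i j. ((\<lambda>t. bmapP C D k t $ i $ j) has_real_derivative (bmapP C D k t ** C + G k t) $ i $ j) (at t within {0..})"
proof (induction k rule: less_induct)
  case (less k)
  show ?case
  proof (cases "k = 0")
    case True
    then show ?thesis using has_field_derivative_at_within[OF E_deriv] by (simp add: P0 G_def)
  next
    case False
    then have k: "k > 0" by simp
    have mcP: "mc0 (bmapP C D m)" if "m < k" for m
      using less[OF that] unfolding mc0_def
      by (auto intro!: continuous_on_eq_continuous_within[THEN iffD2] DERIV_continuous)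
    have mcG: "mc0 (G k)"
      unfolding G_def by (intro mc0_sum mc0_mult mcP mc0_const) auto
    define hh where "hh i m s = (G k s ** E (-s)) $ i $ m" for i m s
    have hcont: "continuous_on {0..} (hh i m)" for i m
      using mc0_mult[OF mcG mc0_Eneg] unfolding mc0_def hh_def by blast
    have repr: "bmapP C D k t $ i $ j = (\<Sum>m\<in>UNIV. E t $ m $ j * integral {0..t} (hh i m))" for t i j
      unfolding hh_def by (rule P_repr[OF k mcG])
    show ?thesis
    proof (intro allI impI)
      fix t :: real and i j assume t: "t \<ge> 0"
      have d: "((\<lambda>t. \<Sum>m\<in>UNIV. E t $ m $ j * integral {0..t} (hh i m)) has_real_derivative
              (\<Sum>m\<in>UNIV. (E t ** C) $ m $ j * integral {0..t} (hh i m) + hh i m t * E t $ m $ j)) (at t within {0..})"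
        by (intro DERIV_sum DERIV_mult has_field_derivative_at_within[OF E_deriv] integral_deriv0[OF hcont t])
      have 1: "(\<Sum>m\<in>UNIV. hh i m t * E t $ m $ j) = G k t $ i $ j"
      proof -
        have "(\<Sum>m\<in>UNIV. hh i m t * E t $ m $ j) = ((G k t ** E (-t)) ** E t) $ i $ j"
          unfolding hh_def by (rule mmult_entry[symmetric])
        also have "\<dots> = G k t $ i $ j"
          using E_group[of "-t" t] by (simp add: matrix_mul_assoc[symmetric] E_0)
        finally show ?thesis .
      qed
      have 2: "(\<Sum>m\<in>UNIV. (E t ** C) $ m $ j * integral {0..t} (hh i m)) = (bmapP C D k t ** C) $ i $ j"
      proof -
        have "(\<Sum>m\<in>UNIV. (E t ** C) $ m $ j * integral {0..t} (hh i m))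
            = (\<Sum>m\<in>UNIV. \<Sum>r\<in>UNIV. E t $ m $ r * C $ r $ j * integral {0..t} (hh i m))"
          by (simp add: mmult_entry sum_distrib_right)
        also have "\<dots> = (\<Sum>r\<in>UNIV. \<Sum>m\<in>UNIV. E t $ m $ r * C $ r $ j * integral {0..t} (hh i m))"
          by (rule sum.swap)
        also have "\<dots> = (\<Sum>r\<in>UNIV. bmapP C D k t $ i $ r * C $ r $ j)"
          by (simp add: repr sum_distrib_left mult_ac)
        also have "\<dots> = (bmapP C D k t ** C) $ i $ j" by (simp add: mmult_entry)
        finally show ?thesis .
      qed
      have v: "(\<Sum>m\<in>UNIV. (E t ** C) $ m $ j * integral {0..t} (hh i m) + hh i m t * E t $ m $ j)
             = (bmapP C D k t ** C + G k t) $ i $ j"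
        using 1 2 by (simp add: sum.distrib)
      have f: "(\<lambda>t. bmapP C D k t $ i $ j) = (\<lambda>t. \<Sum>m\<in>UNIV. E t $ m $ j * integral {0..t} (hh i m))"
        by (rule ext) (rule repr)
      show "((\<lambda>t. bmapP C D k t $ i $ j) has_real_derivative (bmapP C D k t ** C + G k t) $ i $ j) (at t within {0..})"
        using d unfolding v f .
    qed
  qed
qed

lemma mcP_all: "mc0 (bmapP C D k)"
  using DP_all[of k] unfolding mc0_def
  by (auto intro!: continuous_on_eq_continuous_within[THEN iffD2] DERIV_continuous)

lemma mcG_all: "mc0 (G k)"
  unfolding G_def by (intro mc0_sum mc0_mult mcP_all mc0_const)

lemma P_nonneg: "t \<ge> 0 \<Longrightarrow> bmapP C D k t $ i $ j \<ge> 0"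
proof (induction k arbitrary: t i j rule: less_induct)
  case (less k)
  show ?case
  proof (cases "k = 0")
    case True then show ?thesis using less.prems by (simp add: P0 E_nonneg)
  next
    case False
    have "0 \<le> integral {0..t} (\<lambda>s. (G k s ** E (t - s)) $ i $ j)"
    proof (rule Henstock_Kurzweil_Integration.integral_nonneg)
      show "(\<lambda>s. (G k s ** E (t - s)) $ i $ j) integrable_on {0..t}"
        by (rule integrable_continuous_interval, rule continuous_on_subset[OF mc0_mult[OF mcG_all mc0_Eshift, unfolded mc0_def, rule_format]]) auto
      fix s assume s: "s \<in> {0..t}"
      have Gn: "G k s $ a $ b \<ge> 0" for a b
        unfolding G_def sum_component
        by (intro sum_nonneg mmult_nonneg less.IH D_nonneg) (use s False in auto)
      show "0 \<le> (G k s ** E (t - s)) $ i $ j"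
        by (intro mmult_nonneg Gn E_nonneg) (use s in auto)
    qed
    then show ?thesis using False by (simp add: Pk)
  qed
qed

lemma P_at0: "k > 0 \<Longrightarrow> bmapP C D k 0 $ i $ j = 0"
  by (simp add: Pk)

end


lemma rowsum_mmult: "(\<Sum>j\<in>UNIV. (X ** Y) $ i $ j) = (\<Sum>r\<in>UNIV. X $ i $ r * (\<Sum>j\<in>UNIV. Y $ r $ j))"
  unfolding mmult_entry sum_distrib_left by (rule sum.swap)

lemma integral_pos_cont:
  fixes f :: "real \<Rightarrow> real"
  assumes "continuous_on {0..t} f" "t > 0" "\<And>s. s \<in> {0..t} \<Longrightarrow> f s \<ge> 0"
    and "u \<in> {0..t}" "f u > 0"
  shows "integral {0..t} f > 0"
proof -
  have "integral {0..t} f \<ge> 0"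
    by (rule Henstock_Kurzweil_Integration.integral_nonneg) (use assms integrable_continuous_interval in auto)
  moreover have "integral {0..t} f \<noteq> 0"
    using integral_eq_0_iff[OF assms(1,2,3)] assms(4,5) by auto
  ultimately show ?thesis by simp
qed

context bmapL begin

lemma G_nonneg: "s \<ge> 0 \<Longrightarrow> G k s $ a $ b \<ge> 0"
  unfolding G_def sum_component
  by (intro sum_nonneg mmult_nonneg P_nonneg D_nonneg) auto

lemma D_rowsum_le: "(\<Sum>l\<in>{1..n}. \<Sum>j\<in>UNIV. D l $ r $ j) \<le> - (\<Sum>j\<in>UNIV. C $ r $ j)"
proof -
  have "(\<Sum>l\<in>{1..n}. \<Sum>j\<in>UNIV. D l $ r $ j) = (\<Sum>k<n. \<Sum>j\<in>UNIV. D (Suc k) $ r $ j)"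
    using sum.atLeast1_atMost_eq[of "\<lambda>l. \<Sum>j\<in>UNIV. D l $ r $ j" n] by simp
  also have "\<dots> \<le> (\<Sum>k. \<Sum>j\<in>UNIV. D (Suc k) $ r $ j)"
    by (rule sum_le_suminf) (use sums_summable[OF rows] in \<open>auto intro!: sum_nonneg D_nonneg\<close>)
  also have "\<dots> = - (\<Sum>j\<in>UNIV. C $ r $ j)" using sums_unique[OF rows] by simp
  finally show ?thesis .
qed

lemma row_deriv_le:
  assumes t: "t \<ge> 0"
  shows "(\<Sum>k\<le>n. \<Sum>j\<in>UNIV. (bmapP C D k t ** C + G k t) $ i $ j) \<le> 0"
proof -
  define cs where "cs r = (\<Sum>j\<in>UNIV. C $ r $ j)" for r
  define ds where "ds l r = (\<Sum>j\<in>UNIV. D l $ r $ j)" for l r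
  have A: "(\<Sum>j\<in>UNIV. (bmapP C D k t ** C) $ i $ j) = (\<Sum>r\<in>UNIV. bmapP C D k t $ i $ r * cs r)" for k
    unfolding cs_def by (rule rowsum_mmult)
  have B: "(\<Sum>j\<in>UNIV. G k t $ i $ j) = (\<Sum>l\<in>{1..k}. \<Sum>r\<in>UNIV. bmapP C D (k - l) t $ i $ r * ds l r)" for k
  proof -
    have "(\<Sum>j\<in>UNIV. G k t $ i $ j) = (\<Sum>j\<in>UNIV. \<Sum>l\<in>{1..k}. (bmapP C D (k - l) t ** D l) $ i $ j)"
      unfolding G_def by (simp add: sum_component)
    also have "\<dots> = (\<Sum>l\<in>{1..k}. \<Sum>j\<in>UNIV. (bmapP C D (k - l) t ** D l) $ i $ j)"
      by (rule sum.swap)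
    also have "\<dots> = (\<Sum>l\<in>{1..k}. \<Sum>r\<in>UNIV. bmapP C D (k - l) t $ i $ r * ds l r)"
      unfolding ds_def rowsum_mmult ..
    finally show ?thesis .
  qed
  have "(\<Sum>k\<le>n. \<Sum>l\<in>{1..k}. \<Sum>r\<in>UNIV. bmapP C D (k - l) t $ i $ r * ds l r)
      \<le> (\<Sum>m\<le>n. \<Sum>l\<in>{1..n}. \<Sum>r\<in>UNIV. bmapP C D m t $ i $ r * ds l r)"
    by (rule tri_reindex_le[where f="\<lambda>m l. \<Sum>r\<in>UNIV. bmapP C D m t $ i $ r * ds l r"])
       (auto intro!: sum_nonneg mult_nonneg_nonneg P_nonneg t D_nonneg simp: ds_def)
  also have "\<dots> = (\<Sum>m\<le>n. \<Sum>r\<in>UNIV. bmapP C D m t $ i $ r * (\<Sum>l\<in>{1..n}. ds l r))"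
    by (simp add: sum_distrib_left) (intro sum.cong refl, rule sum.swap)
  also have "\<dots> \<le> (\<Sum>m\<le>n. \<Sum>r\<in>UNIV. bmapP C D m t $ i $ r * (- cs r))"
    by (intro sum_mono mult_left_mono P_nonneg t) (simp_all add: ds_def cs_def D_rowsum_le[simplified])
  finally have Bb: "(\<Sum>k\<le>n. \<Sum>j\<in>UNIV. G k t $ i $ j) \<le> - (\<Sum>k\<le>n. \<Sum>r\<in>UNIV. bmapP C D k t $ i $ r * cs r)"
    by (simp add: B sum_negf)
  have "(\<Sum>k\<le>n. \<Sum>j\<in>UNIV. (bmapP C D k t ** C + G k t) $ i $ j)
      = (\<Sum>k\<le>n. \<Sum>r\<in>UNIV. bmapP C D k t $ i $ r * cs r) + (\<Sum>k\<le>n. \<Sum>j\<in>UNIV. G k t $ i $ j)"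
    by (simp add: sum.distrib A)
  with Bb show ?thesis by simp
qed

lemma row_bound:
  assumes t: "t \<ge> 0"
  shows "(\<Sum>k\<le>n. \<Sum>j\<in>UNIV. bmapP C D k t $ i $ j) \<le> 1"
proof -
  define X where "X = (\<lambda>t. \<Sum>k\<le>n. \<Sum>j\<in>UNIV. bmapP C D k t $ i $ j)"
  have dX: "(X has_real_derivative (\<Sum>k\<le>n. \<Sum>j\<in>UNIV. (bmapP C D k x ** C + G k x) $ i $ j)) (at x within {0..})"
    if "x \<ge> 0" for x
    unfolding X_def by (intro DERIV_sum) (use DP_all that in blast)
  have "X t \<le> X 0"
  proof (rule DERIV_nonpos_imp_decreasing_open[OF t])
    fix x :: real assume x: "0 < x" "x < t"
    have "at x within {0..} = at x" by (rule at_within_interior) (use x in simp)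
    then show "\<exists>y. DERIV X x :> y \<and> y \<le> 0" using dX[of x] row_deriv_le[where t=x and n=n and i=i] x by auto
  next
    have "continuous_on {0..} X"
      by (rule continuous_on_eq_continuous_within[THEN iffD2]) (auto intro: DERIV_continuous dX)
    then show "continuous_on {0..t} X" by (rule continuous_on_subset) auto
  qed
  moreover have "X 0 = 1"
  proof -
    have "X 0 = (\<Sum>k\<le>n. if k = 0 then 1 else 0)"
      unfolding X_def by (intro sum.cong refl) (auto simp: P0 E_0 P_at0 mat1_entry)
    then show ?thesis by simp
  qed
  ultimately show ?thesis unfolding X_def by simp
qed

lemma P_le1: "t \<ge> 0 \<Longrightarrow> bmapP C D k t $ i $ j \<le> 1"
proof -
  assume t: "t \<ge> 0"
  have "bmapP C D k t $ i $ j \<le> (\<Sum>j\<in>UNIV. bmapP C D k t $ i $ j)"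
    by (rule sum_ge_term) (auto intro: P_nonneg t)
  also have "\<dots> \<le> (\<Sum>k'\<le>k. \<Sum>j\<in>UNIV. bmapP C D k' t $ i $ j)"
    by (rule sum_ge_term[where f="\<lambda>k'. \<Sum>j\<in>UNIV. bmapP C D k' t $ i $ j"]) (auto intro: sum_nonneg P_nonneg t)
  also have "\<dots> \<le> 1" by (rule row_bound[OF t])
  finally show ?thesis .
qed

lemma partial_le1: "t \<ge> 0 \<Longrightarrow> (\<Sum>l<N. bmapP C D l t $ i $ j) \<le> 1"
proof -
  assume t: "t \<ge> 0"
  have "(\<Sum>l<N. bmapP C D l t $ i $ j) \<le> (\<Sum>l\<le>N. bmapP C D l t $ i $ j)"
    by (rule sum_mono2) (auto intro: P_nonneg t)
  also have "\<dots> \<le> (\<Sum>l\<le>N. \<Sum>j\<in>UNIV. bmapP C D l t $ i $ j)"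
    by (intro sum_mono sum_ge_term) (auto intro: P_nonneg t)
  also have "\<dots> \<le> 1" by (rule row_bound[OF t])
  finally show ?thesis .
qed

end


context bmapL begin

definition RD :: "('m \<times> 'm) set" where "RD = {(a, b). \<exists>m\<ge>1. D m $ a $ b > 0}"

inductive good :: "'m \<Rightarrow> 'm \<Rightarrow> nat \<Rightarrow> bool" for i :: 'm where
  g0: "(i, j) \<in> RC\<^sup>* \<Longrightarrow> good i j 0"
| gs: "good i a l \<Longrightarrow> m \<ge> 1 \<Longrightarrow> D m $ a $ b > 0 \<Longrightarrow> (b, j) \<in> RC\<^sup>* \<Longrightarrow> good i j (l + m)"

lemma good_pos: "good i j l \<Longrightarrow> t > 0 \<Longrightarrow> bmapP C D l t $ i $ j > 0"
proof (induction j l arbitrary: t rule: good.induct)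
  case (g0 j) then show ?case by (simp add: P0 E_reach_pos)
next
  case (gs a l m b j)
  have t2: "t/2 > 0" using gs.prems by simp
  have t3: "t - t/2 > 0" using gs.prems by simp
  have Pa: "bmapP C D l (t/2) $ i $ a > 0" using gs.IH t2 by blast
  have Dab: "D m $ a $ b > 0" by fact
  have m1: "m \<ge> 1" by fact
  have pos: "(G (l + m) (t/2) ** E (t - t/2)) $ i $ j > 0"
  proof -
    have "bmapP C D l (t/2) $ i $ a * D m $ a $ b \<le> (bmapP C D l (t/2) ** D m) $ i $ b"
      unfolding mmult_entry
      by (rule sum_ge_term[where f="\<lambda>r. bmapP C D l (t/2) $ i $ r * D m $ r $ b"])
         (use t2 m1 in \<open>auto intro!: mult_nonneg_nonneg P_nonneg D_nonneg\<close>)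
    also have "\<dots> \<le> G (l + m) (t/2) $ i $ b"
    proof -
      have "(bmapP C D l (t/2) ** D m) $ i $ b = (bmapP C D (l + m - m) (t/2) ** D m) $ i $ b" by simp
      also have "\<dots> \<le> (\<Sum>l'\<in>{1..l+m}. (bmapP C D (l + m - l') (t/2) ** D l') $ i $ b)"
        by (rule sum_ge_term[where f="\<lambda>l'. (bmapP C D (l + m - l') (t/2) ** D l') $ i $ b"])
           (use t2 m1 in \<open>auto intro!: mmult_nonneg P_nonneg D_nonneg\<close>)
      finally show ?thesis by (simp add: G_def sum_component)
    qed
    finally have Gb: "G (l+m) (t/2) $ i $ b \<ge> bmapP C D l (t/2) $ i $ a * D m $ a $ b" .
    have Eb: "E (t - t/2) $ b $ j > 0" by (rule E_reach_pos[OF \<open>(b, j) \<in> RC\<^sup>*\<close> t3])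
    have "G (l+m) (t/2) $ i $ b * E (t - t/2) $ b $ j \<le> (G (l + m) (t/2) ** E (t - t/2)) $ i $ j"
      unfolding mmult_entry
      by (rule sum_ge_term[where f="\<lambda>r. G (l+m) (t/2) $ i $ r * E (t - t/2) $ r $ j"])
         (use t2 t3 in \<open>auto intro!: mult_nonneg_nonneg G_nonneg E_nonneg\<close>)
    moreover have "G (l+m) (t/2) $ i $ b * E (t - t/2) $ b $ j > 0"
      using Gb mult_pos_pos[OF Pa Dab] Eb by (meson mult_pos_pos order_less_le_trans)
    ultimately show ?thesis by linarith
  qed
  have "integral {0..t} (\<lambda>s. (G (l + m) s ** E (t - s)) $ i $ j) > 0"
  proof (rule integral_pos_cont[where u="t/2"])
    show "continuous_on {0..t} (\<lambda>s. (G (l + m) s ** E (t - s)) $ i $ j)"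
      by (rule continuous_on_subset[OF mc0_mult[OF mcG_all mc0_Eshift, unfolded mc0_def, rule_format]]) auto
  next
    show "t > 0" by (rule gs.prems)
  next
    fix s assume "s \<in> {0..t}"
    then show "(G (l + m) s ** E (t - s)) $ i $ j \<ge> 0" by (auto intro!: mmult_nonneg G_nonneg E_nonneg)
  next
    show "t/2 \<in> {0..t}" using gs.prems by auto
  next
    show "(G (l + m) (t/2) ** E (t - t/2)) $ i $ j > 0" by (rule pos)
  qed
  then show ?case using m1 by (simp add: Pk)
qed

lemma good_RC: "good i a l \<Longrightarrow> (a, b) \<in> RC \<Longrightarrow> good i b l"
proof (induction rule: good.cases)
  case (g0 j)
  then have "(i, b) \<in> RC\<^sup>*" by (auto intro: rtrancl_into_rtrancl)
  then show ?case using g0 by (simp add: good.g0)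
next
  case (gs a' l' m b' j)
  then have "(b', b) \<in> RC\<^sup>*" by (auto intro: rtrancl_into_rtrancl)
  then show ?case using gs by (metis good.gs)
qed

lemma good_RD: "good i a l \<Longrightarrow> (a, b) \<in> RD \<Longrightarrow> \<exists>m\<ge>1. good i b (l + m)"
proof -
  assume g: "good i a l" and ab: "(a, b) \<in> RD"
  then obtain m where m: "m \<ge> 1" "D m $ a $ b > 0" unfolding RD_def by blast
  have "good i b (l + m)" by (rule good.gs[OF g m]) simp
  then show ?thesis using m by blast
qed

lemma good_path: "(a, b) \<in> (RC \<union> RD)\<^sup>* \<Longrightarrow> good i a l \<Longrightarrow> \<exists>l'\<ge>l. good i b l'"
proof (induction rule: rtrancl_induct)
  case base then show ?case by blast
next
  case (step x y)
  then obtain l' where l': "l' \<ge> l" "good i x l'" by blast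
  show ?case
  proof (cases "(x, y) \<in> RC")
    case True then show ?thesis using l' good_RC by blast
  next
    case False
    then have "(x, y) \<in> RD" using step(2) by blast
    then obtain m where "good i y (l' + m)" using good_RD[OF l'(2)] by blast
    then show ?thesis using l' by (intro exI[of _ "l' + m"]) auto
  qed
qed

lemma good_unbounded:
  assumes irr: "\<And>a b. (a, b) \<in> (RC \<union> RD)\<^sup>*" and ne: "(a0, b0) \<in> RD"
  shows "\<exists>l\<ge>n. good i j l"
proof -
  have "\<exists>l\<ge>n. good i a0 l"
  proof (induction n)
    case 0
    have "good i i 0" by (rule g0) simp
    then show ?case using good_path[OF irr] by blast
  next
    case (Suc n)
    then obtain l where l: "l \<ge> n" "good i a0 l" by blast
    obtain m where m: "m \<ge> 1" "good i b0 (l + m)" using good_RD[OF l(2) ne] by blast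
    obtain l' where l': "l' \<ge> l + m" "good i a0 l'" using good_path[OF irr m(2)] by blast
    then show ?case using l m by (intro exI[of _ l']) auto
  qed
  then obtain l where l: "l \<ge> n" "good i a0 l" by blast
  obtain l' where "l' \<ge> l" "good i j l'" using good_path[OF irr l(2)] by blast
  then show ?thesis using l by (intro exI[of _ l']) auto
qed

lemma irr_conv:
  assumes irred: "gen_irreducible (C + Dtot D)"
  shows "(a, b) \<in> (RC \<union> RD)\<^sup>*"
proof -
  have p: "(a, b) \<in> {(a, b). a \<noteq> b \<and> (C + Dtot D) $ a $ b > 0}\<^sup>*"
    using irred unfolding gen_irreducible_def by blast
  have edge: "(x, y) \<in> RC \<union> RD" if xy: "x \<noteq> y" "(C + Dtot D) $ x $ y > 0" for x y
  proof (cases "C $ x $ y > 0")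
    case True then show ?thesis using xy by (simp add: RC_def)
  next
    case False
    then have Dp: "Dtot D $ x $ y > 0" using xy C_off[OF xy(1)] by simp
    have "\<exists>k. D (Suc k) $ x $ y > 0"
    proof (rule ccontr)
      assume nk: "\<not> (\<exists>k. D (Suc k) $ x $ y > 0)"
      have "D (Suc k) $ x $ y = 0" for k
      proof -
        have "\<not> D (Suc k) $ x $ y > 0" using nk by blast
        moreover have "D (Suc k) $ x $ y \<ge> 0" by (rule D_nonneg) simp
        ultimately show ?thesis by linarith
      qed
      then have "Dtot D $ x $ y = 0" by (simp add: Dtot_def)
      with Dp show False by simp
    qed
    then obtain k where "D (Suc k) $ x $ y > 0" by blast
    then have "(x, y) \<in> RD" unfolding RD_def by (auto intro!: exI[of _ "Suc k"])
    then show ?thesis by blast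
  qed
  have "{(a, b). a \<noteq> b \<and> (C + Dtot D) $ a $ b > 0} \<subseteq> RC \<union> RD"
    using edge by blast
  then show ?thesis using rtrancl_mono p by blast
qed

lemma RD_ne:
  assumes "arrival_rate D p > 0"
  shows "\<exists>a b. (a, b) \<in> RD"
proof (rule ccontr)
  assume nt: "\<not> ?thesis"
  have "D (Suc k) $ a $ b = 0" for k a b
  proof -
    have "(a, b) \<notin> RD" using nt by blast
    then have "\<not> D (Suc k) $ a $ b > 0" unfolding RD_def by auto
    moreover have "D (Suc k) $ a $ b \<ge> 0" by (rule D_nonneg) simp
    ultimately show ?thesis by linarith
  qed
  then have "arrival_rate D p = 0" by (simp add: arrival_rate_def)
  with assms show False by simp
qed

lemma key_unbounded:
  assumes "gen_irreducible (C + Dtot D)" "arrival_rate D p > 0"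
  shows "\<exists>l\<ge>k. \<forall>t>0. bmapP C D l t $ i $ j > 0"
proof -
  obtain a0 b0 where "(a0, b0) \<in> RD" using RD_ne[OF assms(2)] by blast
  from good_unbounded[OF irr_conv[OF assms(1)] this] obtain l where "l \<ge> k" "good i j l" by blast
  then show ?thesis using good_pos by blast
qed

lemma meas_P: "(\<lambda>t. bmapP C D k t $ i $ j) \<in> borel_measurable borel"
proof (cases "k = 0")
  case True then show ?thesis by (simp add: P0 borel_measurable_continuous_onI E_cont)
next
  case False
  have eq: "(\<lambda>t. bmapP C D k t $ i $ j) = (\<lambda>t. indicator {0..} t *\<^sub>R bmapP C D k t $ i $ j)"
  proof (rule ext)
    fix t :: real
    show "bmapP C D k t $ i $ j = indicator {0..} t *\<^sub>R bmapP C D k t $ i $ j"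
    proof (cases "t \<ge> 0")
      case True then show ?thesis by (simp add: indicator_def)
    next
      case f: False
      then have "{0..t} = {}" by simp
      then show ?thesis using False f by (simp add: Pk indicator_def)
    qed
  qed
  show ?thesis unfolding eq
    by (rule borel_measurable_continuous_on_indicator) (use mcP_all in \<open>auto simp: mc0_def\<close>)
qed

end


theorem lemma8:
  fixes C :: "'m::finite mat" and D :: "nat \<Rightarrow> 'm mat" and H :: "real measure"
    and p :: "real^'m" and h \<mu> :: real
  assumes C_diag: "\<And>i. C $ i $ i < 0"
    and C_off: "\<And>i j. i \<noteq> j \<Longrightarrow> C $ i $ j \<ge> 0"
    and D_nonneg: "\<And>k i j. k \<ge> 1 \<Longrightarrow> D k $ i $ j \<ge> 0"
    and rows: "\<And>i. (\<lambda>k. \<Sum>j\<in>UNIV. D (Suc k) $ i $ j) sums (- (\<Sum>j\<in>UNIV. C $ i $ j))"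
    and irred: "gen_irreducible (C + Dtot D)"
    and stat: "stationary (C + Dtot D) p"
    and rate_summable: "\<And>i. summable (\<lambda>k. real (Suc k) * (\<Sum>j\<in>UNIV. D (Suc k) $ i $ j))"
    and rate_pos: "arrival_rate D p > 0"
    and H_prob: "prob_space H" and H_sets: "sets H = sets borel"
    and H_nonneg: "AE t in H. t \<ge> 0"
    and H_mean_int: "integrable H (\<lambda>t. t)"
    and h_def: "h = (\<integral>t. t \<partial>H)" and h_pos: "h > 0"
    and rho: "arrival_rate D p * h < 1"
    and mu_pos: "\<mu> > 0"
  shows "(\<forall>i. Amat C D H 0 $ i $ i > 0) \<and> (\<forall>i. Abreve C D H \<mu> (-1) $ i $ i > 0)
      \<and> (\<forall>k::nat. \<forall>i j. (\<Sum>l. Amat C D H (l + k) $ i $ j) > 0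
                      \<and> (\<Sum>l. Abreve C D H \<mu> (int l + int k - 1) $ i $ j) > 0)"
proof -
  interpret bmapL C D using C_diag C_off D_nonneg rows by unfold_locales
  interpret H: prob_space H by (rule H_prob)
  have measH: "(\<lambda>t. bmapP C D k t $ i $ j) \<in> borel_measurable H" for k i j
  proof -
    have "measurable H borel = measurable borel (borel :: real measure)"
      by (rule measurable_cong_sets[OF H_sets refl])
    then show ?thesis using meas_P[of k i j] by simp
  qed
  have intH: "integrable H (\<lambda>t. bmapP C D k t $ i $ j)" for k i j
  proof (rule H.integrable_const_bound[where B=1])
    show "AE t in H. norm (bmapP C D k t $ i $ j) \<le> 1"
      using H_nonneg by eventually_elim (use P_nonneg P_le1 in auto)
    show "(\<lambda>t. bmapP C D k t $ i $ j) \<in> borel_measurable H" by (rule measH)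
  qed
  have Aent: "Amat C D H k $ i $ j = (\<integral>t. bmapP C D k t $ i $ j \<partial>H)" for k i j
    by (simp add: Amat_def)
  have aenn: "AE t in H. 0 \<le> bmapP C D k t $ i $ j" for k i j
    using H_nonneg by eventually_elim (rule P_nonneg)
  have Anonneg: "Amat C D H k $ i $ j \<ge> 0" for k i j
    unfolding Aent by (rule integral_nonneg_AE[OF aenn])
  have Apos: "Amat C D H k $ i $ j > 0" if pos: "\<And>t. t > 0 \<Longrightarrow> bmapP C D k t $ i $ j > 0" for k i j
  proof (rule ccontr)
    assume "\<not> ?thesis"
    with Anonneg[of k i j] have "Amat C D H k $ i $ j = 0" by simp
    then have ae0: "AE t in H. bmapP C D k t $ i $ j = 0"
      using integral_nonneg_eq_0_iff_AE[OF intH aenn] unfolding Aent by simp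
    have "AE t in H. t = 0"
      using ae0 H_nonneg
    proof eventually_elim
      case (elim t)
      show ?case
      proof (rule ccontr)
        assume "t \<noteq> 0"
        then have "t > 0" using elim by simp
        then have "bmapP C D k t $ i $ j > 0" by (rule pos)
        then show False using elim by simp
      qed
    qed
    then have "(\<integral>t. t \<partial>H) = 0" by (rule integral_eq_zero_AE)
    with h_def h_pos show False by simp
  qed
  have Asum: "summable (\<lambda>l. Amat C D H l $ i $ j)" for i j
  proof (rule summableI_nonneg_bounded[where x=1])
    show "0 \<le> Amat C D H n $ i $ j" for n by (rule Anonneg)
    fix N
    have "(\<Sum>l<N. Amat C D H l $ i $ j) = (\<integral>t. (\<Sum>l<N. bmapP C D l t $ i $ j) \<partial>H)"
      unfolding Aent by (rule Bochner_Integration.integral_sum[symmetric]) (rule intH)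
    also have "\<dots> \<le> (\<integral>t. 1 \<partial>H)"
    proof (rule integral_mono_AE)
      show "integrable H (\<lambda>t. \<Sum>l<N. bmapP C D l t $ i $ j)"
        by (intro Bochner_Integration.integrable_sum intH)
      show "integrable H (\<lambda>t. 1::real)" by simp
      show "AE t in H. (\<Sum>l<N. bmapP C D l t $ i $ j) \<le> 1"
        using H_nonneg by eventually_elim (rule partial_le1)
    qed
    also have "\<dots> = 1" by (simp add: H.prob_space)
    finally show "(\<Sum>l<N. Amat C D H l $ i $ j) \<le> 1" .
  qed
  have Apos_sum: "(\<Sum>l. Amat C D H (l + k) $ i $ j) > 0" for k i j
  proof -
    obtain l where l: "l \<ge> k" "\<And>t. t > 0 \<Longrightarrow> bmapP C D l t $ i $ j > 0"
      using key_unbounded[OF irred rate_pos, of k i j] by blast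
    have sm: "summable (\<lambda>l. Amat C D H (l + k) $ i $ j)"
      by (rule summable_ignore_initial_segment[OF Asum])
    have "Amat C D H ((l - k) + k) $ i $ j \<le> (\<Sum>l. Amat C D H (l + k) $ i $ j)"
      by (rule suminf_ge_term[OF sm]) (rule Anonneg)
    moreover have "Amat C D H ((l - k) + k) $ i $ j > 0" using Apos[OF l(2)] l(1) by simp
    ultimately show ?thesis by linarith
  qed
  define mu' where "mu' = \<mu> / (\<mu> + theta C)"
  define th' where "th' = theta C / (\<mu> + theta C)"
  have mu'pos: "mu' > 0" unfolding mu'_def using mu_pos theta_pos by simp
  have th'nn: "th' \<ge> 0" unfolding th'_def using mu_pos theta_pos by simp
  have A0diag: "Amat C D H 0 $ i $ i > 0" for i
    by (rule Apos) (simp add: P0 E_diag_pos)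
  have Bterm: "Abreve C D H \<mu> (int l + int k - 1) $ i $ j
      = mu' * Amat C D H (l + k) $ i $ j + (if l + k = 1 then th' * mat 1 $ i $ j else 0)" for l k i j
  proof -
    consider (a) "l + k = 0" | (b) "l + k = 1" | (c) "l + k \<ge> 2" by linarith
    then show ?thesis
    proof cases
      case a
      then have "int l + int k - 1 = -1" by simp
      then show ?thesis using a by (simp add: Abreve_def mu'_def)
    next
      case b
      then have "int l + int k - 1 = 0" by simp
      then show ?thesis using b by (simp add: Abreve_def mu'_def th'_def)
    next
      case c
      then have i1: "int l + int k - 1 > 0" by simp
      have i2: "nat (int l + int k - 1) + 1 = l + k" using c by simp
      show ?thesis using c i1 i2 by (simp add: Abreve_def mu'_def)
    qed
  qed
  have Bsum: "(\<Sum>l. Abreve C D H \<mu> (int l + int k - 1) $ i $ j) > 0" for k i j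
  proof -
    define g where "g l = (if l + k = 1 then th' * mat 1 $ i $ j else 0)" for l
    have gs: "summable g"
    proof -
      have "(\<lambda>l. g (l + 2)) = (\<lambda>l. 0)" by (rule ext) (simp add: g_def)
      then have "summable (\<lambda>l. g (l + 2))" by simp
      then show ?thesis by (rule summable_iff_shift[THEN iffD1])
    qed
    have gnn: "g l \<ge> 0" for l unfolding g_def using th'nn by (simp add: mat1_entry)
    have smA: "summable (\<lambda>l. mu' * Amat C D H (l + k) $ i $ j)"
      by (intro summable_mult summable_ignore_initial_segment Asum)
    have eq: "(\<lambda>l. Abreve C D H \<mu> (int l + int k - 1) $ i $ j) = (\<lambda>l. mu' * Amat C D H (l + k) $ i $ j + g l)"
      by (rule ext) (simp add: Bterm g_def)
    have "(\<Sum>l. mu' * Amat C D H (l + k) $ i $ j) \<le> (\<Sum>l. mu' * Amat C D H (l + k) $ i $ j + g l)"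
      by (rule suminf_le) (use gnn smA gs in \<open>auto intro: summable_add\<close>)
    moreover have "(\<Sum>l. mu' * Amat C D H (l + k) $ i $ j) > 0"
      using suminf_mult[OF summable_ignore_initial_segment[OF Asum], of mu' k i j] Apos_sum[of k i j] mu'pos
      by simp
    ultimately show ?thesis unfolding eq by linarith
  qed
  show ?thesis
  proof (intro conjI allI)
    show "Amat C D H 0 $ i $ i > 0" for i by (rule A0diag)
    show "Abreve C D H \<mu> (-1) $ i $ i > 0" for i
      using A0diag[of i] mu'pos by (simp add: Abreve_def mu'_def[symmetric])
    show "(\<Sum>l. Amat C D H (l + k) $ i $ j) > 0" for k i j by (rule Apos_sum)
    show "(\<Sum>l. Abreve C D H \<mu> (int l + int k - 1) $ i $ j) > 0" for k i j by (rule Bsum)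
  qed
qed

end
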